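(* Let $V$ be a preference profile over a finite candidate set $C$ with a fixed tie-breaking order, and let $w$ be the 2-Approval winner at $V$. Then all Type 2 manipulators at $V$ (GS-manipulators $i$ with $w\in\mathrm{top}_2(v_i)$) have the same two top-ranked candidates in the same order; in particular they all manipulate in favour of the same candidate.
   Context: Each voter $i$ has a strict linear order $v_i$ over $C$; $\mathrm{top}_2(v)$ is the set of the two highest-ranked candidates of $v$. 2-Approval: each candidate gets one point from each voter ranking her among his top two; the highest score wins, ties broken in favour of the candidate highest in the fixed strict linear order on $C$. Write $\mathcal{R}$ for this rule and $(V_{-i},v_i')$ for $V$ with $v_i$ replaced by $v_i'$. A GS-manipulation of voter $i$ at $V$ is a vote $v_i'$ such that $i$ strictly prefers $\mathcal{R}(V_{-i},v_i')$ to $\mathcal{R}(V)$ and for every vote $v_i''$ either $\mathcal{R}(V_{-i},v_i'')=\mathcal{R}(V_{-i},v_i')$ or $i$ strictly prefers $\mathcal{R}(V_{-i},v_i')$ to $\mathcal{R}(V_{-i},v_i'')$; it is in favour of $\mathcal{R}(V_{-i},v_i')$; $i$ is a GS-manipulator if he has one. *)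

theory Defs
  imports Main
begin

text \<open>Candidates form a finite type 'c (so C = UNIV). A vote (strict linear order
over C) is a list enumerating all candidates without repetition, best first.\<close>

definition valid_vote :: "'c::finite list \<Rightarrow> bool" where
  "valid_vote v \<longleftrightarrow> distinct v \<and> set v = UNIV"

definition valid_profile :: "'c::finite list list \<Rightarrow> bool" where
  "valid_profile V \<longleftrightarrow> (\<forall>v \<in> set V. valid_vote v)"

definition top2 :: "'c list \<Rightarrow> 'c set" where
  "top2 v = set (take 2 v)"

definition prefers :: "'c list \<Rightarrow> 'c \<Rightarrow> 'c \<Rightarrow> bool" where
  "prefers v a b \<longleftrightarrow> (\<exists>k l. k < l \<and> l < length v \<and> v ! k = a \<and> v ! l = b)"

definition score2 :: "'c list list \<Rightarrow> 'c \<Rightarrow> nat" where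
  "score2 V c = length (filter (\<lambda>v. c \<in> top2 v) V)"

definition approval2 :: "'c list \<Rightarrow> 'c list list \<Rightarrow> 'c" where
  "approval2 tb V = hd (filter (\<lambda>c. \<forall>d. score2 V d \<le> score2 V c) tb)"

definition GS_manipulation :: "'c::finite list \<Rightarrow> 'c list list \<Rightarrow> nat \<Rightarrow> 'c list \<Rightarrow> bool" where
  "GS_manipulation tb V i v' \<longleftrightarrow>
     valid_vote v' \<and>
     prefers (V ! i) (approval2 tb (V[i := v'])) (approval2 tb V) \<and>
     (\<forall>v''. valid_vote v'' \<longrightarrow>
        approval2 tb (V[i := v'']) = approval2 tb (V[i := v']) \<or>
        prefers (V ! i) (approval2 tb (V[i := v'])) (approval2 tb (V[i := v''])))"

definition GS_manipulator :: "'c::finite list \<Rightarrow> 'c list list \<Rightarrow> nat \<Rightarrow> bool" where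
  "GS_manipulator tb V i \<longleftrightarrow> i < length V \<and> (\<exists>v'. GS_manipulation tb V i v')"

definition type2_manipulator :: "'c::finite list \<Rightarrow> 'c list list \<Rightarrow> nat \<Rightarrow> bool" where
  "type2_manipulator tb V i \<longleftrightarrow> GS_manipulator tb V i \<and> approval2 tb V \<in> top2 (V ! i)"

end

theory Submission
  imports Defs
begin

lemma approval2_props:
  fixes tb :: "'c::finite list"
  assumes "valid_vote tb"
  shows "score2 V d \<le> score2 V (approval2 tb V)"
    and "score2 V d = score2 V (approval2 tb V) \<Longrightarrow> d \<noteq> approval2 tb V
           \<Longrightarrow> prefers tb (approval2 tb V) d"
proof -
  define P where "P = (\<lambda>c. \<forall>d. score2 V d \<le> score2 V c)"
  define M where "M = Max (range (score2 V))"
  have "M \<in> range (score2 V)" unfolding M_def by (intro Max_in) auto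
  then obtain c where c: "score2 V c = M" by auto
  have "P c" unfolding P_def using c M_def by (auto intro: Max_ge)
  moreover have "c \<in> set tb" using assms by (auto simp: valid_vote_def)
  ultimately have ne: "filter P tb \<noteq> []" by (metis filter_empty_conv)
  then obtain W rest where fe: "filter P tb = W # rest" by (cases "filter P tb") auto
  have W: "approval2 tb V = W" using fe by (simp add: approval2_def P_def)
  from filter_eq_ConsD[OF fe] obtain us vs where
    tbeq: "tb = us @ W # vs" and nus: "\<forall>u\<in>set us. \<not> P u" and PW: "P W" by blast
  show "score2 V d \<le> score2 V (approval2 tb V)" using PW W by (simp add: P_def)
  assume eq: "score2 V d = score2 V (approval2 tb V)" and ne2: "d \<noteq> approval2 tb V"
  have Pd: "P d" using eq PW W by (simp add: P_def)
  have "d \<in> set tb" using assms by (auto simp: valid_vote_def)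
  hence "d \<in> set vs" using tbeq nus Pd ne2 W by auto
  then obtain n where n: "n < length vs" "vs ! n = d" by (auto simp: in_set_conv_nth)
  show "prefers tb (approval2 tb V) d"
    unfolding prefers_def
    apply (rule exI[of _ "length us"], rule exI[of _ "Suc (length us + n)"])
    using n W tbeq by (simp add: nth_append)
qed

lemma prefers_asym:
  assumes "distinct v" "prefers v a b" "prefers v b a" shows False
proof -
  from assms(2) obtain k l where 1: "k < l" "l < length v" "v ! k = a" "v ! l = b"
    by (auto simp: prefers_def)
  from assms(3) obtain k' l' where 2: "k' < l'" "l' < length v" "v ! k' = b" "v ! l' = a"
    by (auto simp: prefers_def)
  have "k = l'" using 1 2 assms(1) by (metis nth_eq_iff_index_eq order.strict_trans)
  moreover have "l = k'" using 1 2 assms(1) by (metis nth_eq_iff_index_eq order.strict_trans)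
  ultimately show False using 1 2 by simp
qed

lemma score2_upd:
  assumes "i < length V"
  shows "score2 (V[i:=x]) c + (if c \<in> top2 (V!i) then 1 else 0)
         = score2 V c + (if c \<in> top2 x then 1 else 0)"
proof -
  obtain xs y ys where V: "V = xs @ y # ys" "length xs = i"
    using id_take_nth_drop[OF assms] by (metis assms length_take min.absorb4)
  show ?thesis using V(1) V(2)[symmetric] by (simp add: score2_def list_update_append nth_append)
qed

lemma type2_shape:
  fixes tb :: "'c::finite list"
  assumes vp: "valid_profile V" and t2: "type2_manipulator tb V i"
    and m: "GS_manipulation tb V i v'"
  shows "take 2 (V!i) = [approval2 tb (V[i:=v']), approval2 tb V]"
proof -
  let ?v = "V!i" let ?a = "approval2 tb (V[i:=v'])" let ?w = "approval2 tb V"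
  have il: "i < length V" using t2 by (simp add: type2_manipulator_def GS_manipulator_def)
  have dv: "distinct ?v" using vp il by (simp add: valid_profile_def valid_vote_def)
  from m obtain k l where kl: "k < l" "l < length ?v" "?v ! k = ?a" "?v ! l = ?w"
    by (auto simp: GS_manipulation_def prefers_def)
  have "?w \<in> set (take 2 ?v)" using t2 by (simp add: type2_manipulator_def top2_def)
  then obtain m where mm: "m < length (take 2 ?v)" "take 2 ?v ! m = ?w"
    by (auto simp: in_set_conv_nth)
  have "m < 2" "m < length ?v" "?v ! m = ?w" using mm by auto
  hence "l = m" using kl dv by (metis nth_eq_iff_index_eq)
  hence "l = 1" "k = 0" using kl \<open>m < 2\<close> by auto
  thus ?thesis using kl
    by (cases ?v; cases "tl ?v") (auto simp: numeral_2_eq_2)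
qed

lemma type2_same:
  fixes tb :: "'c::finite list"
  assumes tbv: "valid_vote tb" and vp: "valid_profile V"
    and ti: "type2_manipulator tb V i" and tj: "type2_manipulator tb V j"
    and mi: "GS_manipulation tb V i v'" and mj: "GS_manipulation tb V j v''"
  shows "approval2 tb (V[i := v']) = approval2 tb (V[j := v''])"
proof (rule ccontr)
  let ?a = "approval2 tb (V[i:=v'])" let ?b = "approval2 tb (V[j:=v''])"
  let ?w = "approval2 tb V"
  assume ne: "?a \<noteq> ?b"
  have il: "i < length V" using ti by (simp add: type2_manipulator_def GS_manipulator_def)
  have jl: "j < length V" using tj by (simp add: type2_manipulator_def GS_manipulator_def)
  have si: "take 2 (V!i) = [?a, ?w]" by (rule type2_shape[OF vp ti mi])
  have sj: "take 2 (V!j) = [?b, ?w]" by (rule type2_shape[OF vp tj mj])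
  have dj: "distinct (V!j)" using vp jl by (simp add: valid_profile_def valid_vote_def)
  have "distinct (take 2 (V!j))" using dj by simp
  hence bw: "?b \<noteq> ?w" using sj by simp
  have di: "distinct (V!i)" using vp il by (simp add: valid_profile_def valid_vote_def)
  have "distinct (take 2 (V!i))" using di by simp
  hence aw: "?a \<noteq> ?w" using si by simp
  have ti2: "top2 (V!i) = {?a, ?w}" using si by (simp add: top2_def)
  have tj2: "top2 (V!j) = {?b, ?w}" using sj by (simp add: top2_def)
  have 1: "score2 (V[i:=v']) ?a \<le> score2 V ?a" using score2_upd[OF il, of v' ?a] ti2
    by (auto split: if_splits)
  have 2: "score2 (V[i:=v']) ?b \<ge> score2 V ?b" using score2_upd[OF il, of v' ?b] ti2 ne bw
    by (auto split: if_splits)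
  have 3: "score2 (V[j:=v'']) ?b \<le> score2 V ?b" using score2_upd[OF jl, of v'' ?b] tj2
    by (auto split: if_splits)
  have 4: "score2 (V[j:=v'']) ?a \<ge> score2 V ?a" using score2_upd[OF jl, of v'' ?a] tj2 ne aw
    by (auto split: if_splits)
  have 5: "score2 (V[i:=v']) ?b \<le> score2 (V[i:=v']) ?a" by (rule approval2_props(1)[OF tbv])
  have 6: "score2 (V[j:=v'']) ?a \<le> score2 (V[j:=v'']) ?b" by (rule approval2_props(1)[OF tbv])
  have p1: "prefers tb ?a ?b"
    using approval2_props(2)[OF tbv, of "V[i:=v']" ?b] 1 2 3 4 5 6 ne by simp
  have p2: "prefers tb ?b ?a"
    using approval2_props(2)[OF tbv, of "V[j:=v'']" ?a] 1 2 3 4 5 6 ne by simp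
  show False using prefers_asym[OF _ p1 p2] tbv by (simp add: valid_vote_def)
qed

theorem mainTheorem10:
  fixes tb :: "'c::finite list" and V :: "'c list list"
  assumes "valid_vote tb" and "valid_profile V"
    and "type2_manipulator tb V i" and "type2_manipulator tb V j"
  shows "take 2 (V ! i) = take 2 (V ! j) \<and>
         (\<forall>v' v''. GS_manipulation tb V i v' \<longrightarrow> GS_manipulation tb V j v'' \<longrightarrow>
            approval2 tb (V[i := v']) = approval2 tb (V[j := v'']))"
proof
  obtain v' where v': "GS_manipulation tb V i v'"
    using assms(3) by (auto simp: type2_manipulator_def GS_manipulator_def)
  obtain v'' where v'': "GS_manipulation tb V j v''"
    using assms(4) by (auto simp: type2_manipulator_def GS_manipulator_def)
  show "take 2 (V ! i) = take 2 (V ! j)"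
    using type2_shape[OF assms(2,3) v'] type2_shape[OF assms(2,4) v'']
      type2_same[OF assms v' v''] by simp
  show "\<forall>v' v''. GS_manipulation tb V i v' \<longrightarrow> GS_manipulation tb V j v'' \<longrightarrow>
            approval2 tb (V[i := v']) = approval2 tb (V[j := v''])"
    using type2_same[OF assms] by blast
qed

end
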